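(* If $(\gamma_0,\ldots,\gamma_{\lfloor d/2\rfloor})$ is an $f$-vector (i.e., the $f$-vector of some simplicial complex), then the $g$-vector $(g_0,\ldots,g_{\lfloor d/2\rfloor})$ is a pure $f$-vector (and hence a pure $M$-vector as well). In particular, $(h_0,\ldots,h_d)$ is an SI-sequence.
   Context: Let $(h_0,\ldots,h_d)\in\mathbb{Z}^{d+1}$ be a sequence of integers with $h_0 = 1$ and $h_i = h_{d-i}$ for each $0\leqslant i\leqslant d$. Consider the palindromic polynomial $h(x) = \sum_{i=0}^d h_i x^i$ and its $\gamma$-expansion $h(x) = \sum_{i=0}^{\lfloor d/2\rfloor} \gamma_i\, x^i(1+x)^{d-2i}$. The $g$-vector is $(g_0,\ldots,g_{\lfloor d/2\rfloor})$ with $g_0 = h_0 = 1$ and $g_i = h_i - h_{i-1}$ for $1\leqslant i\leqslant \lfloor d/2\rfloor$. A sequence is an $f$-vector if it is the $f$-vector $(f_0,f_1,\ldots)$ of a simplicial complex ($f_i$ = number of faces of cardinality $i$), and a pure $f$-vector if the complex can be taken pure; it is an $M$-vector if there is a multicomplex whose degree-$i$ monomials are counted by its $i$-th entry (pure $M$-vector if the multicomplex is pure). An SI-sequence is a sequence $(h_0,\ldots,h_d)$ with $h_0=1$, $h_i=h_{d-i}$, and whose $g$-vector is an $M$-vector. *)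

theory Defs
  imports "HOL-Computational_Algebra.Polynomial" "HOL-Library.Multiset"
begin

text \<open>Finite sequences (a_0,...,a_k) are represented as functions nat => int
  together with the last index k.\<close>

definition simplicial_complex :: "nat set set \<Rightarrow> bool" where
  "simplicial_complex D \<longleftrightarrow> finite D \<and> D \<noteq> {} \<and> (\<forall>F\<in>D. finite F)
     \<and> (\<forall>F\<in>D. \<forall>G. G \<subseteq> F \<longrightarrow> G \<in> D)"

definition pure_complex :: "nat set set \<Rightarrow> bool" where
  "pure_complex D \<longleftrightarrow> (\<forall>F\<in>D. \<forall>G\<in>D.
      (\<not> (\<exists>H\<in>D. F \<subset> H)) \<and> (\<not> (\<exists>H\<in>D. G \<subset> H)) \<longrightarrow> card F = card G)"

definition has_f_vector :: "nat set set \<Rightarrow> (nat \<Rightarrow> int) \<Rightarrow> nat \<Rightarrow> bool" where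
  "has_f_vector D f k \<longleftrightarrow> (\<forall>F\<in>D. card F \<le> k)
     \<and> (\<forall>i\<le>k. f i = int (card {F\<in>D. card F = i}))"

definition is_f_vector :: "(nat \<Rightarrow> int) \<Rightarrow> nat \<Rightarrow> bool" where
  "is_f_vector f k \<longleftrightarrow> (\<exists>D. simplicial_complex D \<and> has_f_vector D f k)"

definition is_pure_f_vector :: "(nat \<Rightarrow> int) \<Rightarrow> nat \<Rightarrow> bool" where
  "is_pure_f_vector f k \<longleftrightarrow> (\<exists>D. simplicial_complex D \<and> pure_complex D \<and> has_f_vector D f k)"

text \<open>Monomials in variables indexed by nat are multisets of variables; divisibility
  is multiset inclusion, degree is size.\<close>

definition multicomplex :: "nat multiset set \<Rightarrow> bool" where
  "multicomplex M \<longleftrightarrow> finite M \<and> M \<noteq> {} \<and> (\<forall>m\<in>M. \<forall>n. n \<subseteq># m \<longrightarrow> n \<in> M)"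

definition pure_multicomplex :: "nat multiset set \<Rightarrow> bool" where
  "pure_multicomplex M \<longleftrightarrow> (\<forall>m\<in>M. \<forall>n\<in>M.
      (\<not> (\<exists>p\<in>M. m \<subset># p)) \<and> (\<not> (\<exists>p\<in>M. n \<subset># p)) \<longrightarrow> size m = size n)"

definition has_M_vector :: "nat multiset set \<Rightarrow> (nat \<Rightarrow> int) \<Rightarrow> nat \<Rightarrow> bool" where
  "has_M_vector M f k \<longleftrightarrow> (\<forall>m\<in>M. size m \<le> k)
     \<and> (\<forall>i\<le>k. f i = int (card {m\<in>M. size m = i}))"

definition is_M_vector :: "(nat \<Rightarrow> int) \<Rightarrow> nat \<Rightarrow> bool" where
  "is_M_vector f k \<longleftrightarrow> (\<exists>M. multicomplex M \<and> has_M_vector M f k)"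

definition is_pure_M_vector :: "(nat \<Rightarrow> int) \<Rightarrow> nat \<Rightarrow> bool" where
  "is_pure_M_vector f k \<longleftrightarrow> (\<exists>M. multicomplex M \<and> pure_multicomplex M \<and> has_M_vector M f k)"

definition g_vector :: "(nat \<Rightarrow> int) \<Rightarrow> nat \<Rightarrow> int" where
  "g_vector h i = (if i = 0 then h 0 else h i - h (i - 1))"

definition h_poly :: "(nat \<Rightarrow> int) \<Rightarrow> nat \<Rightarrow> int poly" where
  "h_poly h d = (\<Sum>i\<le>d. monom (h i) i)"

definition gamma_expansion :: "(nat \<Rightarrow> int) \<Rightarrow> nat \<Rightarrow> int poly" where
  "gamma_expansion \<gamma> d = (\<Sum>i\<le>d div 2. smult (\<gamma> i) (monom 1 i * [:1, 1:] ^ (d - 2 * i)))"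

definition SI_sequence :: "(nat \<Rightarrow> int) \<Rightarrow> nat \<Rightarrow> bool" where
  "SI_sequence h d \<longleftrightarrow> h 0 = 1 \<and> (\<forall>i\<le>d. h i = h (d - i)) \<and> is_M_vector (g_vector h) (d div 2)"

end

theory Submission
  imports Defs
begin

definition bal :: "nat \<Rightarrow> nat set set" where
  "bal n = {S. S \<subseteq> {1..n} \<and> (\<forall>t\<in>S. 2 * card {s\<in>S. s \<le> t} \<le> t)}"

lemma bal_finite: "S \<in> bal n \<Longrightarrow> finite S"
  unfolding bal_def using finite_subset by blast

lemma bal_sub: "S \<in> bal n \<Longrightarrow> T \<subseteq> S \<Longrightarrow> m \<ge> n \<Longrightarrow> T \<in> bal m"
proof -
  assume S: "S \<in> bal n" and T: "T \<subseteq> S" and m: "m \<ge> n"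
  have fS: "finite S" using S bal_finite by blast
  show "T \<in> bal m" unfolding bal_def
  proof (intro CollectI conjI ballI)
    show "T \<subseteq> {1..m}" using S T m unfolding bal_def by auto
  next
    fix t assume t: "t \<in> T"
    have "card {s\<in>T. s \<le> t} \<le> card {s\<in>S. s \<le> t}"
      using fS T by (intro card_mono) auto
    moreover have "2 * card {s\<in>S. s \<le> t} \<le> t" using S t T unfolding bal_def by auto
    ultimately show "2 * card {s\<in>T. s \<le> t} \<le> t" by linarith
  qed
qed

lemma bal_card: "S \<in> bal n \<Longrightarrow> 2 * card S \<le> n"
proof -
  assume S: "S \<in> bal n"
  show ?thesis
  proof (cases "S = {}")
    case False
    have fS: "finite S" using S bal_finite by blast
    define t where "t = Max S"
    have t: "t \<in> S" using False fS t_def by simp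
    have "{s\<in>S. s \<le> t} = S" using fS t_def by auto
    hence "2 * card S \<le> t" using S t unfolding bal_def by auto
    moreover have "t \<le> n" using S t unfolding bal_def by auto
    ultimately show ?thesis by simp
  qed simp
qed

lemma bal_extend1:
  assumes S: "S \<in> bal n" and c: "2 * card S + 2 \<le> n"
  shows "\<exists>x. x \<notin> S \<and> insert x S \<in> bal n"
proof -
  have fS: "finite S" using S bal_finite by blast
  have sub: "S \<subseteq> {1..n}" using S unfolding bal_def by blast
  have ne: "{1..n} - S \<noteq> {}"
  proof
    assume "{1..n} - S = {}"
    hence "{1..n} \<subseteq> S" by blast
    hence "card {1..n} \<le> card S" by (rule card_mono[OF fS])
    thus False using c by simp
  qed
  define x where "x = Max ({1..n} - S)"
  have x: "x \<in> {1..n} - S" using ne unfolding x_def by (intro Max_in) auto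
  have above: "\<And>y. x < y \<Longrightarrow> y \<le> n \<Longrightarrow> y \<in> S"
  proof (rule ccontr)
    fix y assume "x < y" "y \<le> n" "y \<notin> S"
    hence "y \<in> {1..n} - S" using x by auto
    hence "y \<le> x" unfolding x_def by (intro Max_ge) auto
    thus False using \<open>x < y\<close> by simp
  qed
  have fI: "finite (insert x S)" using fS by blast
  have "insert x S \<in> bal n" unfolding bal_def
  proof (intro CollectI conjI ballI)
    show "insert x S \<subseteq> {1..n}" using x sub by blast
  next
    fix t assume t: "t \<in> insert x S"
    show "2 * card {s \<in> insert x S. s \<le> t} \<le> t"
    proof (cases "t < x")
      case True
      have "{s \<in> insert x S. s \<le> t} = {s \<in> S. s \<le> t}" using True by auto
      moreover have "t \<in> S" using t True by auto
      ultimately show ?thesis using S unfolding bal_def by simp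
    next
      case False
      have tn: "t \<le> n" using t x sub by auto
      have split: "insert x S = {s \<in> insert x S. s \<le> t} \<union> {t<..n}"
      proof (intro equalityI subsetI)
        fix y assume y: "y \<in> insert x S"
        hence "y \<le> n" using x sub by auto
        thus "y \<in> {s \<in> insert x S. s \<le> t} \<union> {t<..n}" using y by auto
      next
        fix y assume y: "y \<in> {s \<in> insert x S. s \<le> t} \<union> {t<..n}"
        show "y \<in> insert x S"
        proof (cases "y \<le> t")
          case True thus ?thesis using y by auto
        next
          case False
          hence "x < y" "y \<le> n" using y \<open>\<not> t < x\<close> by auto
          thus ?thesis using above by blast
        qed
      qed
      have d: "{s \<in> insert x S. s \<le> t} \<inter> {t<..n} = {}" by auto
      have f1: "finite {s \<in> insert x S. s \<le> t}" using fI by simp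
      have "card (insert x S) = card ({s \<in> insert x S. s \<le> t} \<union> {t<..n})"
        by (rule arg_cong[OF split])
      also have "\<dots> = card {s \<in> insert x S. s \<le> t} + card {t<..n}"
        using card_Un_disjoint[OF f1 _ d] by simp
      finally have e: "card (insert x S) = card {s \<in> insert x S. s \<le> t} + (n - t)" by simp
      have "card (insert x S) = card S + 1" using x fS by simp
      thus ?thesis using e c tn by linarith
    qed
  qed
  thus ?thesis using x by blast
qed

lemma bal_extend:
  assumes S: "S \<in> bal n"
  shows "\<exists>T. S \<subseteq> T \<and> T \<in> bal n \<and> card T = n div 2"
proof -
  have "\<And>S. S \<in> bal n \<Longrightarrow> n div 2 - card S = k \<Longrightarrow> \<exists>T. S \<subseteq> T \<and> T \<in> bal n \<and> card T = n div 2" for k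
  proof (induction k)
    case 0
    then show ?case using bal_card[OF 0(1)] by (intro exI[of _ S]) auto
  next
    case (Suc k)
    have "2 * card S + 2 \<le> n" using Suc.prems by auto
    then obtain x where x: "x \<notin> S" "insert x S \<in> bal n" using bal_extend1 Suc.prems by blast
    have "n div 2 - card (insert x S) = k" using x Suc.prems bal_finite by auto
    then obtain T where "insert x S \<subseteq> T \<and> T \<in> bal n \<and> card T = n div 2" using Suc.IH x by blast
    thus ?case by blast
  qed
  thus ?thesis using S by blast
qed

lemma balI: "S \<subseteq> {1..n} \<Longrightarrow> (\<And>t. t \<in> S \<Longrightarrow> 2 * card {s\<in>S. s \<le> t} \<le> t) \<Longrightarrow> S \<in> bal n"
  unfolding bal_def by blast
lemma balD1: "S \<in> bal n \<Longrightarrow> S \<subseteq> {1..n}"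
  unfolding bal_def by blast
lemma balD2: "S \<in> bal n \<Longrightarrow> t \<in> S \<Longrightarrow> 2 * card {s\<in>S. s \<le> t} \<le> t"
  unfolding bal_def by blast

lemma bal_Suc_split:
  "bal (Suc m) = bal m \<union> insert (Suc m) ` {S \<in> bal m. 2 * (card S + 1) \<le> Suc m}"
proof (intro equalityI subsetI)
  fix S assume S: "S \<in> bal (Suc m)"
  have fS: "finite S" using S bal_finite by blast
  have subS: "S \<subseteq> {1..Suc m}" using balD1[OF S] .
  show "S \<in> bal m \<union> insert (Suc m) ` {S \<in> bal m. 2 * (card S + 1) \<le> Suc m}"
  proof (cases "Suc m \<in> S")
    case False
    hence "S \<subseteq> {1..m}" using subS by (auto simp: le_Suc_eq)
    hence "S \<in> bal m" using balD2[OF S] by (intro balI)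
    thus ?thesis by blast
  next
    case True
    let ?S' = "S - {Suc m}"
    have s1: "?S' \<subseteq> {1..m}" using subS by (auto simp: le_Suc_eq)
    have s2: "?S' \<in> bal (Suc m)" by (rule bal_sub[OF S]) auto
    have b: "?S' \<in> bal m" using s1 balD2[OF s2] by (intro balI)
    have "{s\<in>S. s \<le> Suc m} = S" using subS by auto
    hence "2 * card S \<le> Suc m" using balD2[OF S True] by simp
    moreover have "card S = card ?S' + 1" using True fS
      by (metis Suc_eq_plus1 card_Suc_Diff1)
    ultimately have "2 * (card ?S' + 1) \<le> Suc m" by simp
    moreover have "S = insert (Suc m) ?S'" using True by auto
    ultimately show ?thesis using b by blast
  qed
next
  fix S assume S: "S \<in> bal m \<union> insert (Suc m) ` {S \<in> bal m. 2 * (card S + 1) \<le> Suc m}"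
  show "S \<in> bal (Suc m)"
  proof (cases "S \<in> bal m")
    case True
    show ?thesis by (rule bal_sub[OF True subset_refl]) simp
  next
    case False
    then obtain S' where S': "S' \<in> bal m" "2 * (card S' + 1) \<le> Suc m" "S = insert (Suc m) S'"
      using S by blast
    have fS': "finite S'" using S' bal_finite by blast
    have sub: "S' \<subseteq> {1..m}" using balD1[OF S'(1)] .
    have nin: "Suc m \<notin> S'" using sub by auto
    show ?thesis
    proof (rule balI)
      show "S \<subseteq> {1..Suc m}" using sub S'(3) by auto
    next
      fix t assume t: "t \<in> S"
      show "2 * card {s \<in> S. s \<le> t} \<le> t"
      proof (cases "t = Suc m")
        case True
        have "{s \<in> S. s \<le> t} = insert (Suc m) S'" using True sub S'(3) by auto
        thus ?thesis using S'(2) fS' True nin by simp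
      next
        case False
        hence tS': "t \<in> S'" using t S'(3) by auto
        have "{s \<in> S. s \<le> t} = {s \<in> S'. s \<le> t}" using tS' sub S'(3) by auto
        thus ?thesis using balD2[OF S'(1) tS'] by simp
      qed
    qed
  qed
qed

definition B :: "nat \<Rightarrow> nat \<Rightarrow> nat" where
  "B n j = card {S \<in> bal n. card S = j}"

lemma bal_finite_set: "finite (bal n)"
proof -
  have "bal n \<subseteq> Pow {1..n}" unfolding bal_def by auto
  thus ?thesis by (rule finite_subset) simp
qed

lemma bal_notin: assumes "S \<in> bal m" shows "Suc m \<notin> S"
proof
  assume "Suc m \<in> S"
  hence "Suc m \<in> {1..m}" using balD1[OF assms] by blast
  thus False by simp
qed

lemma B_Suc: "B (Suc m) (Suc j) = B m (Suc j) + (if 2 * (j + 1) \<le> Suc m then B m j else 0)"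
proof -
  let ?A = "{S \<in> bal m. card S = Suc j}"
  let ?D = "{S \<in> bal m. card S = j \<and> 2 * (card S + 1) \<le> Suc m}"
  let ?C = "insert (Suc m) ` ?D"
  have ci: "\<And>S. S \<in> bal m \<Longrightarrow> card (insert (Suc m) S) = card S + 1"
    using bal_finite bal_notin by simp
  have eq: "{S \<in> bal (Suc m). card S = Suc j} = ?A \<union> ?C"
  proof (intro equalityI subsetI)
    fix S assume "S \<in> {S \<in> bal (Suc m). card S = Suc j}"
    hence S0: "S \<in> bal (Suc m)" "card S = Suc j" by simp_all
    have S: "S \<in> bal m \<union> insert (Suc m) ` {S \<in> bal m. 2 * (card S + 1) \<le> Suc m}" "card S = Suc j"
      using S0 bal_Suc_split by simp_all
    show "S \<in> ?A \<union> ?C"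
    proof (cases "S \<in> bal m")
      case True thus ?thesis using S by blast
    next
      case False
      then obtain S' where S': "S' \<in> bal m" "2 * (card S' + 1) \<le> Suc m" "S = insert (Suc m) S'"
        using S(1) by blast
      have "card S' = j" using S(2) ci[OF S'(1)] S'(3) by simp
      hence "S' \<in> ?D" using S' by simp
      hence "S \<in> ?C" using S'(3) by (rule rev_image_eqI)
      thus ?thesis by (rule UnI2)
    qed
  next
    fix S assume "S \<in> ?A \<union> ?C"
    thus "S \<in> {S \<in> bal (Suc m). card S = Suc j}"
    proof (elim UnE)
      assume "S \<in> ?A" thus ?thesis using bal_sub[of S m S "Suc m"] by simp
    next
      assume "S \<in> ?C"
      then obtain S' where S': "S' \<in> ?D" "S = insert (Suc m) S'" by blast
      hence "S \<in> bal (Suc m)" by (subst bal_Suc_split) blast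
      thus ?thesis using S' ci by simp
    qed
  qed
  have disj: "?A \<inter> ?C = {}"
  proof (intro equalityI subsetI)
    fix X assume X: "X \<in> ?A \<inter> ?C"
    hence "X \<in> bal m" by simp
    moreover have "Suc m \<in> X" using X by blast
    ultimately show "X \<in> {}" using bal_notin by blast
  qed simp
  have fA: "finite ?A" by (rule finite_subset[OF _ bal_finite_set]) blast
  have fD: "finite ?D" by (rule finite_subset[OF _ bal_finite_set]) blast
  have fC: "finite ?C" using fD by (rule finite_imageI)
  have inj: "inj_on (insert (Suc m)) ?D"
  proof (rule inj_onI)
    fix X Y assume "X \<in> ?D" "Y \<in> ?D" "insert (Suc m) X = insert (Suc m) Y"
    moreover have "Suc m \<notin> X" "Suc m \<notin> Y" using bal_notin \<open>X \<in> ?D\<close> \<open>Y \<in> ?D\<close> by simp_all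
    ultimately show "X = Y" by (metis Diff_insert_absorb)
  qed
  have "card ?C = card ?D" by (rule card_image[OF inj])
  also have "\<dots> = (if 2 * (j + 1) \<le> Suc m then B m j else 0)"
  proof (cases "2 * (j + 1) \<le> Suc m")
    case True
    hence "?D = {S \<in> bal m. card S = j}" by auto
    thus ?thesis using True unfolding B_def by simp
  next
    case False
    hence "?D = {}" by auto
    hence "card ?D = 0" by (metis card.empty)
    thus ?thesis using False by simp
  qed
  finally have cC: "card ?C = (if 2 * (j + 1) \<le> Suc m then B m j else 0)" .
  have "B (Suc m) (Suc j) = card (?A \<union> ?C)" unfolding B_def using eq by simp
  also have "\<dots> = card ?A + card ?C" using card_Un_disjoint[OF fA fC disj] .
  finally show ?thesis using cC unfolding B_def by simp
qed

lemma B_0: "B n 0 = 1"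
proof -
  have "{S \<in> bal n. card S = 0} = {{}}"
  proof (intro equalityI subsetI)
    fix S assume "S \<in> {S \<in> bal n. card S = 0}"
    hence "S \<in> bal n" "card S = 0" by simp_all
    thus "S \<in> {{}}" using bal_finite by (metis card_0_eq singletonI)
  next
    fix S :: "nat set" assume "S \<in> {{}}"
    hence "S = {}" by simp
    moreover have "{} \<in> bal n" by (rule balI) simp_all
    ultimately show "S \<in> {S \<in> bal n. card S = 0}" by simp
  qed
  thus ?thesis unfolding B_def by simp
qed

lemma B_big: assumes "n < 2 * j" shows "B n j = 0"
proof -
  have "{S \<in> bal n. card S = j} = {}"
  proof (intro equalityI subsetI)
    fix S assume "S \<in> {S \<in> bal n. card S = j}"
    hence "S \<in> bal n" "card S = j" by simp_all
    hence "2 * j \<le> n" using bal_card by metis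
    thus "S \<in> {}" using assms by simp
  qed simp
  thus ?thesis unfolding B_def by (metis card.empty)
qed

definition cb :: "nat \<Rightarrow> nat \<Rightarrow> int" where
  "cb n j = int (n choose j) - (if j = 0 then 0 else int (n choose (j - 1)))"

lemma B_cb: "2 * j \<le> n + 1 \<Longrightarrow> int (B n j) = cb n j"
proof (induction n arbitrary: j)
  case 0
  then show ?case by (cases j) (auto simp: B_0 cb_def)
next
  case (Suc m)
  show ?case
  proof (cases j)
    case 0
    then show ?thesis by (simp add: B_0 cb_def)
  next
    case (Suc i)
    show ?thesis
    proof (cases "2 * j \<le> Suc m")
      case True
      have "int (B (Suc m) j) = int (B m (Suc i)) + int (B m i)"
        using True Suc by (simp add: B_Suc)
      also have "\<dots> = cb m (Suc i) + cb m i"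
        using Suc.IH True Suc by simp
      also have "\<dots> = cb (Suc m) j"
        using Suc by (cases i) (simp_all add: cb_def)
      finally show ?thesis .
    next
      case False
      hence j: "2 * j = Suc m + 1" using Suc.prems by simp
      have "B (Suc m) j = 0" using j by (intro B_big) simp
      moreover have "cb (Suc m) j = 0"
      proof -
        have "Suc m = 2 * i + 1" using j Suc by simp
        moreover have "(2 * i + 1) choose (i + 1) = (2 * i + 1) choose i"
          using binomial_symmetric[of i "2 * i + 1"] by simp
        ultimately have "Suc m choose j = Suc m choose (j - 1)" using Suc by simp
        thus ?thesis unfolding cb_def using Suc by simp
      qed
      ultimately show ?thesis by simp
    qed
  qed
qed

definition enc :: "nat set \<Rightarrow> nat set \<Rightarrow> nat set" where
  "enc F S = (\<lambda>x. 2 * x) ` F \<union> (\<lambda>x. Suc (2 * x)) ` S"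
definition decF :: "nat set \<Rightarrow> nat set" where "decF X = {x. 2 * x \<in> X}"
definition decS :: "nat set \<Rightarrow> nat set" where "decS X = {x. Suc (2 * x) \<in> X}"

lemma par_neq1[simp]: "2 * (x::nat) \<noteq> Suc (2 * y)"
proof
  assume "2 * x = Suc (2 * y)"
  hence "even (Suc (2 * y))" by (metis dvd_triv_left)
  thus False by simp
qed
lemma par_neq2[simp]: "Suc (2 * y) \<noteq> 2 * (x::nat)"
  using par_neq1[of x y] by metis

lemma decF_enc[simp]: "decF (enc F S) = F"
proof -
  have "2 * x \<in> enc F S \<longleftrightarrow> x \<in> F" for x unfolding enc_def by auto
  thus ?thesis unfolding decF_def by simp
qed
lemma decS_enc[simp]: "decS (enc F S) = S"
proof -
  have "Suc (2 * x) \<in> enc F S \<longleftrightarrow> x \<in> S" for x unfolding enc_def by auto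
  thus ?thesis unfolding decS_def by simp
qed

lemma enc_dec: "enc (decF X) (decS X) = X"
proof (intro equalityI subsetI)
  fix x assume "x \<in> enc (decF X) (decS X)"
  then show "x \<in> X" unfolding enc_def decF_def decS_def by blast
next
  fix x assume x: "x \<in> X"
  show "x \<in> enc (decF X) (decS X)"
  proof (cases "even x")
    case True
    then obtain y where y: "x = 2 * y" by (rule evenE)
    hence "y \<in> decF X" using x unfolding decF_def by simp
    thus ?thesis unfolding enc_def y by blast
  next
    case False
    then obtain y where y: "x = 2 * y + 1" by (rule oddE)
    hence "y \<in> decS X" using x unfolding decS_def by simp
    thus ?thesis unfolding enc_def y by simp
  qed
qed

lemma enc_eq_iff: "enc F S = enc F' S' \<longleftrightarrow> F = F' \<and> S = S'"
  by (metis decF_enc decS_enc)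

lemma card_enc: "finite F \<Longrightarrow> finite S \<Longrightarrow> card (enc F S) = card F + card S"
proof -
  assume fF: "finite F" and fS: "finite S"
  have d: "(\<lambda>x. 2 * x) ` F \<inter> (\<lambda>x. Suc (2 * x)) ` S = {}" by auto
  have i1: "inj_on (\<lambda>x::nat. 2 * x) F" by (rule inj_onI) simp
  have i2: "inj_on (\<lambda>x::nat. Suc (2 * x)) S" by (rule inj_onI) simp
  have "card (enc F S) = card ((\<lambda>x. 2 * x) ` F) + card ((\<lambda>x. Suc (2 * x)) ` S)"
    unfolding enc_def using fF fS d by (intro card_Un_disjoint) auto
  also have "\<dots> = card F + card S" using card_image[OF i1] card_image[OF i2] by simp
  finally show ?thesis .
qed

lemma enc_mono: "F \<subseteq> F' \<Longrightarrow> S \<subseteq> S' \<Longrightarrow> enc F S \<subseteq> enc F' S'"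
  unfolding enc_def by blast

lemma dec_mono: "X \<subseteq> Y \<Longrightarrow> decF X \<subseteq> decF Y \<and> decS X \<subseteq> decS Y"
  unfolding decF_def decS_def by blast

definition DD :: "nat \<Rightarrow> nat set set \<Rightarrow> nat set set" where
  "DD d \<Delta> = (\<lambda>(F, S). enc F S) ` (SIGMA F:\<Delta>. bal (d - 2 * card F))"

lemma DD_mem: "X \<in> DD d \<Delta> \<longleftrightarrow> (\<exists>F S. F \<in> \<Delta> \<and> S \<in> bal (d - 2 * card F) \<and> X = enc F S)"
  unfolding DD_def by blast

locale ddloc =
  fixes d :: nat and \<Delta> :: "nat set set"
  assumes sc: "simplicial_complex \<Delta>"
    and bd: "\<And>F. F \<in> \<Delta> \<Longrightarrow> card F \<le> d div 2"
begin

lemma finD: "finite \<Delta>" and neD: "\<Delta> \<noteq> {}" and ffD: "\<And>F. F \<in> \<Delta> \<Longrightarrow> finite F"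
  and subD: "\<And>F G. F \<in> \<Delta> \<Longrightarrow> G \<subseteq> F \<Longrightarrow> G \<in> \<Delta>"
  using sc unfolding simplicial_complex_def by blast+

lemma emptyD: "{} \<in> \<Delta>"
proof -
  obtain F where "F \<in> \<Delta>" using neD by blast
  thus ?thesis using subD by blast
qed

lemma DD_sc: "simplicial_complex (DD d \<Delta>)"
  unfolding simplicial_complex_def
proof (intro conjI ballI allI impI)
  show "finite (DD d \<Delta>)" unfolding DD_def
    using finD bal_finite_set by (intro finite_imageI finite_SigmaI) auto
next
  have "enc {} {} \<in> DD d \<Delta>" unfolding DD_mem
  proof (intro exI conjI)
    show "{} \<in> \<Delta>" by (rule emptyD)
    show "{} \<in> bal (d - 2 * card {})" by (rule balI) simp_all
  qed simp
  thus "DD d \<Delta> \<noteq> {}" by blast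
next
  fix X assume "X \<in> DD d \<Delta>"
  then obtain F S where "F \<in> \<Delta>" "S \<in> bal (d - 2 * card F)" "X = enc F S"
    unfolding DD_mem by blast
  thus "finite X" unfolding enc_def using ffD bal_finite by blast
next
  fix X G assume X: "X \<in> DD d \<Delta>" and G: "G \<subseteq> X"
  then obtain F S where FS: "F \<in> \<Delta>" "S \<in> bal (d - 2 * card F)" "X = enc F S"
    unfolding DD_mem by blast
  have m: "decF G \<subseteq> F" "decS G \<subseteq> S" using dec_mono[OF G] FS(3) by simp_all
  have F': "decF G \<in> \<Delta>" using subD[OF FS(1) m(1)] .
  have "card (decF G) \<le> card F" using card_mono[OF ffD[OF FS(1)] m(1)] .
  hence "d - 2 * card F \<le> d - 2 * card (decF G)" by simp
  hence S': "decS G \<in> bal (d - 2 * card (decF G))" by (rule bal_sub[OF FS(2) m(2)])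
  show "G \<in> DD d \<Delta>" unfolding DD_mem
    using F' S' enc_dec[of G] by metis
qed

lemma DD_card: assumes "X \<in> DD d \<Delta>" shows "card X \<le> d div 2"
proof -
  obtain F S where FS: "F \<in> \<Delta>" "S \<in> bal (d - 2 * card F)" "X = enc F S"
    using assms unfolding DD_mem by blast
  have c: "card X = card F + card S" using card_enc[OF ffD[OF FS(1)] bal_finite[OF FS(2)]] FS(3) by simp
  have "2 * card S \<le> d - 2 * card F" by (rule bal_card[OF FS(2)])
  moreover have "card F \<le> d div 2" by (rule bd[OF FS(1)])
  ultimately show ?thesis using c by presburger
qed

lemma DD_ext: assumes "X \<in> DD d \<Delta>" shows "\<exists>Y\<in>DD d \<Delta>. X \<subseteq> Y \<and> card Y = d div 2"
proof -
  obtain F S where FS: "F \<in> \<Delta>" "S \<in> bal (d - 2 * card F)" "X = enc F S"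
    using assms unfolding DD_mem by blast
  obtain T where T: "S \<subseteq> T" "T \<in> bal (d - 2 * card F)" "card T = (d - 2 * card F) div 2"
    using bal_extend[OF FS(2)] by blast
  have Y: "enc F T \<in> DD d \<Delta>" unfolding DD_mem using FS(1) T(2) by blast
  have "card (enc F T) = card F + card T" by (rule card_enc[OF ffD[OF FS(1)] bal_finite[OF T(2)]])
  moreover have "card F \<le> d div 2" by (rule bd[OF FS(1)])
  ultimately have "card (enc F T) = d div 2" using T(3) by presburger
  moreover have "X \<subseteq> enc F T" using FS(3) T(1) enc_mono by blast
  ultimately show ?thesis using Y by blast
qed

lemma DD_pure: "pure_complex (DD d \<Delta>)"
  unfolding pure_complex_def
proof (intro ballI impI)
  have key: "card X = d div 2" if X: "X \<in> DD d \<Delta>" and mx: "\<not> (\<exists>H\<in>DD d \<Delta>. X \<subset> H)" for X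
  proof -
    obtain Y where Y: "Y \<in> DD d \<Delta>" "X \<subseteq> Y" "card Y = d div 2" using DD_ext[OF X] by blast
    have "X = Y" using Y mx by blast
    thus ?thesis using Y by simp
  qed
  fix F G assume "F \<in> DD d \<Delta>" "G \<in> DD d \<Delta>"
    "\<not> (\<exists>H\<in>DD d \<Delta>. F \<subset> H) \<and> \<not> (\<exists>H\<in>DD d \<Delta>. G \<subset> H)"
  thus "card F = card G" using key by metis
qed

end

lemma coeff_lin_pow: "coeff ([:1, 1:] ^ n) j = (of_nat (n choose j) :: int)"
proof (cases "j \<le> n")
  case True
  thus ?thesis using coeff_linear_poly_power[OF True, of "1::int" 1] by simp
next
  case False
  have "degree ([:1::int, 1:] ^ n) = n" by (rule degree_linear_power)
  hence "coeff ([:1::int, 1:] ^ n) j = 0" using False by (intro coeff_eq_0) simp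
  thus ?thesis using False by simp
qed

lemma coeff_h_poly: "k \<le> d \<Longrightarrow> coeff (h_poly h d) k = h k"
  unfolding h_poly_def by (simp add: coeff_sum coeff_monom)

lemma coeff_gamma: "coeff (gamma_expansion \<gamma> d) k =
   (\<Sum>i\<le>d div 2. \<gamma> i * (if i \<le> k then int ((d - 2 * i) choose (k - i)) else 0))"
  unfolding gamma_expansion_def coeff_sum coeff_smult coeff_monom_mult coeff_lin_pow
  by (intro sum.cong) auto

lemma g_formula:
  assumes eq: "h_poly h d = gamma_expansion \<gamma> d" and k: "k \<le> d div 2"
  shows "g_vector h k = (\<Sum>i\<le>d div 2. \<gamma> i * (if i \<le> k then cb (d - 2 * i) (k - i) else 0))"
proof (cases "k = 0")
  case True
  have "g_vector h k = h 0" using True unfolding g_vector_def by simp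
  also have "\<dots> = coeff (gamma_expansion \<gamma> d) 0" using coeff_h_poly[of 0 d h] eq by simp
  also have "\<dots> = (\<Sum>i\<le>d div 2. \<gamma> i * (if i \<le> k then cb (d - 2 * i) (k - i) else 0))"
    unfolding coeff_gamma using True by (intro sum.cong) (auto simp: cb_def)
  finally show ?thesis .
next
  case False
  have kd: "k \<le> d" "k - 1 \<le> d" using k by auto
  have "g_vector h k = h k - h (k - 1)" using False unfolding g_vector_def by simp
  also have "\<dots> = coeff (gamma_expansion \<gamma> d) k - coeff (gamma_expansion \<gamma> d) (k - 1)"
    using coeff_h_poly[OF kd(1), of h] coeff_h_poly[OF kd(2), of h] eq by simp
  also have "\<dots> = (\<Sum>i\<le>d div 2. \<gamma> i * (if i \<le> k then int ((d - 2 * i) choose (k - i)) else 0)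
      - \<gamma> i * (if i \<le> k - 1 then int ((d - 2 * i) choose (k - 1 - i)) else 0))"
    unfolding coeff_gamma by (simp add: sum_subtractf)
  also have "\<dots> = (\<Sum>i\<le>d div 2. \<gamma> i * (if i \<le> k then cb (d - 2 * i) (k - i) else 0))"
  proof (intro sum.cong refl)
    fix i
    show "\<gamma> i * (if i \<le> k then int ((d - 2 * i) choose (k - i)) else 0)
      - \<gamma> i * (if i \<le> k - 1 then int ((d - 2 * i) choose (k - 1 - i)) else 0)
      = \<gamma> i * (if i \<le> k then cb (d - 2 * i) (k - i) else 0)"
    proof (cases "i \<le> k - 1")
      case True
      hence "k - i \<noteq> 0" "k - i - 1 = k - 1 - i" "i \<le> k" using False by auto
      thus ?thesis using True unfolding cb_def by (simp add: right_diff_distrib)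
    next
      case F2: False
      show ?thesis
      proof (cases "i = k")
        case True thus ?thesis using F2 unfolding cb_def by simp
      next
        case False thus ?thesis using F2 by simp
      qed
    qed
  qed
  finally show ?thesis .
qed

lemma sum_by_card:
  fixes \<phi> :: "nat \<Rightarrow> int"
  assumes fin: "finite \<Delta>" and bd: "\<And>F. F \<in> \<Delta> \<Longrightarrow> card F \<le> K"
  shows "(\<Sum>F\<in>\<Delta>. \<phi> (card F)) = (\<Sum>i\<le>K. int (card {F\<in>\<Delta>. card F = i}) * \<phi> i)"
proof -
  have im: "card ` \<Delta> \<subseteq> {..K}" using bd by blast
  have "(\<Sum>F\<in>\<Delta>. \<phi> (card F)) = (\<Sum>i\<le>K. \<Sum>F\<in>{F\<in>\<Delta>. card F = i}. \<phi> (card F))"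
    using sum.group[OF fin finite_atMost im, of "\<lambda>F. \<phi> (card F)"] by simp
  also have "\<dots> = (\<Sum>i\<le>K. int (card {F\<in>\<Delta>. card F = i}) * \<phi> i)"
  proof (intro sum.cong refl)
    fix i
    have "(\<Sum>F\<in>{F\<in>\<Delta>. card F = i}. \<phi> (card F)) = (\<Sum>F\<in>{F\<in>\<Delta>. card F = i}. \<phi> i)"
      by (intro sum.cong) auto
    also have "\<dots> = int (card {F\<in>\<Delta>. card F = i}) * \<phi> i" by simp
    finally show "(\<Sum>F\<in>{F\<in>\<Delta>. card F = i}. \<phi> (card F)) = int (card {F\<in>\<Delta>. card F = i}) * \<phi> i" .
  qed
  finally show ?thesis .
qed

context ddloc begin

lemma DD_count:
  assumes k: "k \<le> d div 2"
  shows "int (card {X \<in> DD d \<Delta>. card X = k}) =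
    (\<Sum>i\<le>d div 2. int (card {F\<in>\<Delta>. card F = i}) * (if i \<le> k then cb (d - 2 * i) (k - i) else 0))"
proof -
  let ?Q = "\<lambda>F. {S \<in> bal (d - 2 * card F). card S = k - card F}"
  let ?P = "SIGMA F:{F\<in>\<Delta>. card F \<le> k}. ?Q F"
  let ?e = "\<lambda>(F, S). enc F S"
  have eqset: "{X \<in> DD d \<Delta>. card X = k} = ?e ` ?P"
  proof (intro equalityI subsetI)
    fix X assume "X \<in> {X \<in> DD d \<Delta>. card X = k}"
    then obtain F S where FS: "F \<in> \<Delta>" "S \<in> bal (d - 2 * card F)" "X = enc F S" "card X = k"
      unfolding DD_mem by blast
    have "card X = card F + card S" using card_enc[OF ffD[OF FS(1)] bal_finite[OF FS(2)]] FS(3) by simp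
    hence "card F \<le> k" "card S = k - card F" using FS(4) by simp_all
    hence "(F, S) \<in> ?P" using FS(1,2) by simp
    moreover have "X = ?e (F, S)" using FS(3) by simp
    ultimately show "X \<in> ?e ` ?P" by (rule rev_image_eqI)
  next
    fix X assume "X \<in> ?e ` ?P"
    then obtain F S where FS: "(F, S) \<in> ?P" "X = enc F S" by blast
    hence F: "F \<in> \<Delta>" "card F \<le> k" and S: "S \<in> bal (d - 2 * card F)" "card S = k - card F" by simp_all
    have "X \<in> DD d \<Delta>" unfolding DD_mem using F S FS(2) by blast
    moreover have "card X = k" using card_enc[OF ffD[OF F(1)] bal_finite[OF S(1)]] FS(2) F(2) S(2) by simp
    ultimately show "X \<in> {X \<in> DD d \<Delta>. card X = k}" by simp
  qed
  have inj: "inj_on ?e ?P" by (rule inj_onI) (auto simp: enc_eq_iff)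
  have fQ: "\<forall>F\<in>{F\<in>\<Delta>. card F \<le> k}. finite (?Q F)" using bal_finite_set by simp
  have fD': "finite {F\<in>\<Delta>. card F \<le> k}" using finD by simp
  have "card {X \<in> DD d \<Delta>. card X = k} = card ?P" unfolding eqset by (rule card_image[OF inj])
  also have "\<dots> = (\<Sum>F\<in>{F\<in>\<Delta>. card F \<le> k}. card (?Q F))" by (rule card_SigmaI[OF fD' fQ])
  also have "\<dots> = (\<Sum>F\<in>\<Delta>. if card F \<le> k then B (d - 2 * card F) (k - card F) else 0)"
    unfolding B_def by (rule sum.inter_filter[OF finD])
  finally have "int (card {X \<in> DD d \<Delta>. card X = k}) =
      int (\<Sum>F\<in>\<Delta>. if card F \<le> k then B (d - 2 * card F) (k - card F) else 0)" by simp
  also have "\<dots> = (\<Sum>F\<in>\<Delta>. int (if card F \<le> k then B (d - 2 * card F) (k - card F) else 0))"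
    by (rule of_nat_sum)
  also have "\<dots> = (\<Sum>F\<in>\<Delta>. (\<lambda>i. if i \<le> k then int (B (d - 2 * i) (k - i)) else 0) (card F))"
    by (intro sum.cong refl) simp
  also have "\<dots> = (\<Sum>i\<le>d div 2. int (card {F\<in>\<Delta>. card F = i}) *
      (if i \<le> k then int (B (d - 2 * i) (k - i)) else 0))"
    by (rule sum_by_card[OF finD bd])
  also have "\<dots> = (\<Sum>i\<le>d div 2. int (card {F\<in>\<Delta>. card F = i}) * (if i \<le> k then cb (d - 2 * i) (k - i) else 0))"
  proof (intro sum.cong refl)
    fix i
    have "i \<le> k \<Longrightarrow> 2 * (k - i) \<le> d - 2 * i + 1" using k by presburger
    thus "int (card {F\<in>\<Delta>. card F = i}) * (if i \<le> k then int (B (d - 2 * i) (k - i)) else 0) =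
      int (card {F\<in>\<Delta>. card F = i}) * (if i \<le> k then cb (d - 2 * i) (k - i) else 0)"
      using B_cb by simp
  qed
  finally show ?thesis .
qed

end

lemma pure_M_of_pure_f:
  assumes sc: "simplicial_complex D"
    and bd: "\<And>X. X \<in> D \<Longrightarrow> card X \<le> K"
    and ext: "\<And>X. X \<in> D \<Longrightarrow> \<exists>Y\<in>D. X \<subseteq> Y \<and> card Y = K"
    and hf: "has_f_vector D f K"
  shows "is_pure_M_vector f K"
proof -
  have finD: "finite D" and neD: "D \<noteq> {}" and ffD: "\<And>F. F \<in> D \<Longrightarrow> finite F"
    and subD: "\<And>F G. F \<in> D \<Longrightarrow> G \<subseteq> F \<Longrightarrow> G \<in> D"
    using sc unfolding simplicial_complex_def by blast+
  let ?M = "mset_set ` D"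
  have mc: "multicomplex ?M" unfolding multicomplex_def
  proof (intro conjI ballI allI impI)
    show "finite ?M" using finD by simp
    show "?M \<noteq> {}" using neD by simp
  next
    fix m n assume m: "m \<in> ?M" and n: "n \<subseteq># m"
    then obtain X where X: "X \<in> D" "m = mset_set X" by blast
    have fX: "finite X" using ffD[OF X(1)] .
    have c: "count n x \<le> count (mset_set X) x" for x using n X(2) by (simp add: subseteq_mset_def)
    have sub: "set_mset n \<subseteq> X"
    proof
      fix x assume "x \<in># n"
      hence "count n x > 0" by simp
      hence "count (mset_set X) x > 0" using c[of x] by linarith
      thus "x \<in> X" using fX by (simp add: count_mset_set' split: if_splits)
    qed
    have "mset_set (set_mset n) = n"
    proof (rule multiset_eqI)
      fix x
      have "count n x \<le> 1" using c[of x] by (simp add: count_mset_set' split: if_splits)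
      thus "count (mset_set (set_mset n)) x = count n x"
      proof (cases "x \<in># n")
        case True
        hence "count n x > 0" by simp
        hence "count n x = 1" using \<open>count n x \<le> 1\<close> by linarith
        thus ?thesis using True by (simp add: count_mset_set')
      qed (simp add: count_mset_set' not_in_iff)
    qed
    moreover have "set_mset n \<in> D" using subD[OF X(1) sub] .
    ultimately show "n \<in> ?M" by (metis image_eqI)
  qed
  have pm: "pure_multicomplex ?M" unfolding pure_multicomplex_def
  proof (intro ballI impI)
    have key: "size m = K" if m: "m \<in> ?M" and mx: "\<not> (\<exists>p\<in>?M. m \<subset># p)" for m
    proof -
      obtain X where X: "X \<in> D" "m = mset_set X" using m by blast
      obtain Y where Y: "Y \<in> D" "X \<subseteq> Y" "card Y = K" using ext[OF X(1)] by blast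
      have fX: "finite X" "finite Y" using ffD X(1) Y(1) by auto
      have le: "mset_set X \<subseteq># mset_set Y" using fX Y(2) by simp
      have "X = Y"
      proof (rule ccontr)
        assume "X \<noteq> Y"
        hence "mset_set X \<noteq> mset_set Y" using fX by simp
        hence "m \<subset># mset_set Y" using le X(2) by (simp add: subset_mset.le_imp_less_or_eq)
        moreover have "mset_set Y \<in> ?M" using Y(1) by blast
        ultimately show False using mx by blast
      qed
      thus ?thesis using X Y by simp
    qed
    fix m n assume "m \<in> ?M" "n \<in> ?M" "\<not> (\<exists>p\<in>?M. m \<subset># p) \<and> \<not> (\<exists>p\<in>?M. n \<subset># p)"
    thus "size m = size n" using key by metis
  qed
  have hm: "has_M_vector ?M f K" unfolding has_M_vector_def
  proof (intro conjI ballI allI impI)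
    fix m assume "m \<in> ?M"
    then obtain X where X: "X \<in> D" "m = mset_set X" by blast
    thus "size m \<le> K" using bd by simp
  next
    fix i assume i: "i \<le> K"
    have inj: "inj_on mset_set {X \<in> D. card X = i}"
      by (rule inj_onI) (use ffD in auto)
    have "{m \<in> ?M. size m = i} = mset_set ` {X \<in> D. card X = i}" by auto
    hence "card {m \<in> ?M. size m = i} = card {X \<in> D. card X = i}"
      using card_image[OF inj] by simp
    thus "f i = int (card {m \<in> ?M. size m = i})" using hf i unfolding has_f_vector_def by simp
  qed
  show ?thesis unfolding is_pure_M_vector_def using mc pm hm by blast
qed

theorem proposition8p2:
  fixes d :: nat and h \<gamma> :: "nat \<Rightarrow> int"
  assumes "h 0 = 1"
    and "\<forall>i\<le>d. h i = h (d - i)"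
    and "h_poly h d = gamma_expansion \<gamma> d"
    and "is_f_vector \<gamma> (d div 2)"
  shows "is_pure_f_vector (g_vector h) (d div 2)
       \<and> is_pure_M_vector (g_vector h) (d div 2)
       \<and> SI_sequence h d"
proof -
  obtain \<Delta> where sc: "simplicial_complex \<Delta>" and hf: "has_f_vector \<Delta> \<gamma> (d div 2)"
    using assms(4) unfolding is_f_vector_def by blast
  have bd: "\<And>F. F \<in> \<Delta> \<Longrightarrow> card F \<le> d div 2" using hf unfolding has_f_vector_def by blast
  have gam: "\<And>i. i \<le> d div 2 \<Longrightarrow> \<gamma> i = int (card {F\<in>\<Delta>. card F = i})"
    using hf unfolding has_f_vector_def by blast
  interpret ddloc d \<Delta> using sc bd by unfold_locales
  have hfD: "has_f_vector (DD d \<Delta>) (g_vector h) (d div 2)" unfolding has_f_vector_def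
  proof (intro conjI ballI allI impI)
    fix X assume "X \<in> DD d \<Delta>" thus "card X \<le> d div 2" by (rule DD_card)
  next
    fix k assume k: "k \<le> d div 2"
    have "g_vector h k = (\<Sum>i\<le>d div 2. \<gamma> i * (if i \<le> k then cb (d - 2 * i) (k - i) else 0))"
      by (rule g_formula[OF assms(3) k])
    also have "\<dots> = (\<Sum>i\<le>d div 2. int (card {F\<in>\<Delta>. card F = i}) * (if i \<le> k then cb (d - 2 * i) (k - i) else 0))"
      by (intro sum.cong refl) (simp add: gam)
    also have "\<dots> = int (card {X \<in> DD d \<Delta>. card X = k})" by (rule DD_count[OF k, symmetric])
    finally show "g_vector h k = int (card {X \<in> DD d \<Delta>. card X = k})" .
  qed
  have pf: "is_pure_f_vector (g_vector h) (d div 2)"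
    unfolding is_pure_f_vector_def using DD_sc DD_pure hfD by blast
  have pM: "is_pure_M_vector (g_vector h) (d div 2)"
    by (rule pure_M_of_pure_f[OF DD_sc DD_card DD_ext hfD])
  have "is_M_vector (g_vector h) (d div 2)"
    using pM unfolding is_pure_M_vector_def is_M_vector_def by blast
  hence "SI_sequence h d" unfolding SI_sequence_def using assms(1,2) by blast
  thus ?thesis using pf pM by blast
qed

end
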